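(* Fix $\alpha\in(0,1)$, $d\ge2$, $a\in\mathbb{R}$, $w=(w_1,\dots,w_d)\in\mathbb{R}^d$, $\beta\in\mathbb{R}$, and $\Delta t>0$ with $\Delta t<1/C^2$ where $C=\max\{|a|,\max_i|w_i|\}$ (assume $C>0$). Define $T:\mathbb{R}^d\to\mathbb{R}^d$, $x\mapsto y$, by $y^{(i)}=x^{(i)}$ for $i=1,\dots,d-1$ and $y^{(d)}=x^{(d)}+a\,\Delta t\tanh(w\cdot x+\beta)$, where superscripts denote coordinates. Then for every compact $\mathcal{K}\subset\mathbb{R}^d$ and every $\varepsilon>0$ there exist $L\in\mathbb{N}$ and $f_L\in\mathcal{N}_d(L)$ with $\|T(x)-f_L(x)\|\le\varepsilon$ for all $x\in\mathcal{K}$.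
   Context: Leaky-ReLU: $\sigma_\alpha(x)=\max(\alpha x,x)$, applied componentwise. $\mathcal{N}_d(L)$ consists of all maps $f_L:\mathbb{R}^d\to\mathbb{R}^d$ defined recursively by $f_0(x)=W^{[0]}x+b^{[0]}$, $f_k(x)=W^{[k]}\sigma_\alpha(f_{k-1}(x))+b^{[k]}$ for $k=1,\dots,L$, with arbitrary $W^{[k]}\in\mathbb{R}^{d\times d}$, $b^{[k]}\in\mathbb{R}^d$. *)

theory Defs
  imports "HOL-Analysis.Analysis"
begin

definition lrelu :: "real \<Rightarrow> real \<Rightarrow> real" where
  "lrelu \<alpha> x = max (\<alpha> * x) x"

definition lrelu_vec :: "real \<Rightarrow> real^'n \<Rightarrow> real^'n" where
  "lrelu_vec \<alpha> v = (\<chi> i. lrelu \<alpha> (v $ i))"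

definition net_eval :: "real \<Rightarrow> real^'n^'n \<Rightarrow> real^'n \<Rightarrow> ((real^'n^'n) \<times> (real^'n)) list
    \<Rightarrow> real^'n \<Rightarrow> real^'n" where
  "net_eval \<alpha> W0 b0 Ls x =
     foldl (\<lambda>v (W, b). W *v lrelu_vec \<alpha> v + b) (W0 *v x + b0) Ls"

text \<open>The class N_d(L) (d is the dimension given by the index type 'n).\<close>
definition NN :: "real \<Rightarrow> nat \<Rightarrow> (real^'n \<Rightarrow> real^'n) set" where
  "NN \<alpha> L = {f. \<exists>W0 b0 Ls. length Ls = L \<and> f = net_eval \<alpha> W0 b0 Ls}"

end

theory Submission
  imports Defs
begin


lemma NN_affine: "(\<lambda>x. A *v x + c) \<in> NN \<alpha> 0"
  unfolding NN_def net_eval_def by (rule CollectI, rule exI[of _ A], rule exI[of _ c], rule exI[of _ "[]"]) auto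

lemma net_eval_snoc: "net_eval \<alpha> W0 b0 (Ls @ [(W,b)]) x = W *v lrelu_vec \<alpha> (net_eval \<alpha> W0 b0 Ls x) + b"
  unfolding net_eval_def by simp

lemma NN_snoc: assumes "f \<in> NN \<alpha> L" shows "(\<lambda>x. W *v lrelu_vec \<alpha> (f x) + b) \<in> NN \<alpha> (Suc L)"
proof -
  obtain W0 b0 Ls where "length Ls = L" "f = net_eval \<alpha> W0 b0 Ls" using assms unfolding NN_def by auto
  then show ?thesis unfolding NN_def
    by (intro CollectI exI[of _ W0] exI[of _ b0] exI[of _ "Ls @ [(W,b)]"]) (auto simp: net_eval_snoc)
qed

lemma NN_post: assumes "f \<in> NN \<alpha> L" shows "(\<lambda>x. A *v f x + c) \<in> NN \<alpha> L"
proof -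
  obtain W0 b0 Ls where L: "length Ls = L" and f: "f = net_eval \<alpha> W0 b0 Ls" using assms unfolding NN_def by auto
  show ?thesis
  proof (cases Ls rule: rev_exhaust)
    case Nil
    have "(\<lambda>x. A *v f x + c) = (\<lambda>x. (A ** W0) *v x + (A *v b0 + c))"
      by (auto simp: f Nil net_eval_def matrix_vector_right_distrib matrix_vector_mul_assoc)
    then show ?thesis using NN_affine[of "A ** W0" "A *v b0 + c" \<alpha>] L Nil by simp
  next
    case (snoc ys y)
    obtain W b where y: "y = (W,b)" by fastforce
    have "(\<lambda>x. A *v f x + c) = net_eval \<alpha> W0 b0 (ys @ [(A ** W, A *v b + c)])"
      by (auto simp: f snoc y net_eval_snoc matrix_vector_right_distrib matrix_vector_mul_assoc add.assoc)
    then show ?thesis unfolding NN_def using L snoc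
      by (intro CollectI exI[of _ W0] exI[of _ b0] exI[of _ "ys @ [(A ** W, A *v b + c)]"]) auto
  qed
qed

lemma NN_comp: assumes "g \<in> NN \<alpha> L2" "f \<in> NN \<alpha> L1" shows "(\<lambda>x. g (f x)) \<in> NN \<alpha> (L1 + L2)"
proof -
  obtain W0 b0 Ls where L: "length Ls = L2" and g: "g = net_eval \<alpha> W0 b0 Ls" using assms unfolding NN_def by auto
  have "(\<lambda>x. net_eval \<alpha> W0 b0 Ls (f x)) \<in> NN \<alpha> (L1 + length Ls)"
  proof (induction Ls rule: rev_induct)
    case Nil
    then show ?case using NN_post[OF assms(2), of W0 b0] by (simp add: net_eval_def)
  next
    case (snoc y ys)
    obtain W b where y: "y = (W,b)" by fastforce
    show ?case using NN_snoc[OF snoc.IH, of W b] by (simp add: y net_eval_snoc)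
  qed
  then show ?thesis using L g by simp
qed

definition erep :: "real \<Rightarrow> (real^'n) set \<Rightarrow> (real^'n \<Rightarrow> real^'n) \<Rightarrow> bool" where
  "erep \<alpha> S F \<longleftrightarrow> (\<exists>L. \<exists>f\<in>NN \<alpha> L. \<forall>x\<in>S. f x = F x)"

lemma erep_comp: assumes "erep \<alpha> S F" "\<And>x. x \<in> S \<Longrightarrow> F x \<in> S'" "erep \<alpha> S' G"
  shows "erep \<alpha> S (\<lambda>x. G (F x))"
proof -
  obtain L1 f where f: "f \<in> NN \<alpha> L1" "\<forall>x\<in>S. f x = F x" using assms(1) unfolding erep_def by auto
  obtain L2 g where g: "g \<in> NN \<alpha> L2" "\<forall>x\<in>S'. g x = G x" using assms(3) unfolding erep_def by auto
  show ?thesis unfolding erep_def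
    by (rule exI[of _ "L1+L2"], rule bexI[OF _ NN_comp[OF g(1) f(1)]]) (use f(2) g(2) assms(2) in auto)
qed

lemma erep_linear: assumes "linear L" shows "erep \<alpha> S (\<lambda>x. L x + c)"
proof -
  have e: "matrix L *v x = L x" for x using fun_cong[OF matrix_vector_mul(2)[OF assms], of x] by simp
  show ?thesis unfolding erep_def
    by (rule exI[of _ 0], rule bexI[OF _ NN_affine[of "matrix L" c]]) (simp add: e)
qed




definition kink :: "real \<Rightarrow> real \<Rightarrow> real \<Rightarrow> real" where
  "kink c \<rho> y = (if y \<le> c then y else c + \<rho> * (y - c))"

lemma kink_kink: "\<rho>2 > 0 \<Longrightarrow> kink c \<rho>1 (kink c \<rho>2 y) = kink c (\<rho>1 * \<rho>2) y"
  unfolding kink_def by (auto simp: algebra_simps mult_pos_pos)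

lemma kink_below: "y \<le> c \<Longrightarrow> kink c \<rho> y = y" unfolding kink_def by simp

lemma kink_above: "Z \<ge> 0 \<Longrightarrow> kink c \<rho> (c + Z) = c + \<rho> * Z" unfolding kink_def by auto

lemma kstep:
  fixes F :: "real \<Rightarrow> real"
  assumes m1: "m1 > 0" and rho: "\<rho> > 1" and rho': "\<rho>' * \<rho> = 1" and dl: "\<delta> > 0"
    and D1: "m1 * \<delta> \<le> D" and D2: "D \<le> m1 * \<rho> * \<delta>"
    and Fr: "\<forall>u\<ge>t0. F u = c + m1 * (u - t0)" and Fl: "\<forall>u\<le>t0. F u \<le> c"
    and tau: "\<tau> = t0 + \<delta> - (D - m1 * \<delta>) / (m1 * \<rho> - m1)"
    and y1: "y1 = c + m1 * (\<tau> - t0)" and y2: "y2 = c + D"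
  shows "\<forall>u\<le>t0. kink y2 \<rho>' (kink y1 \<rho> (F u)) = F u"
    and "\<forall>u. t0 \<le> u \<longrightarrow> u \<le> t0 + \<delta> \<longrightarrow> c \<le> kink y2 \<rho>' (kink y1 \<rho> (F u)) \<and> kink y2 \<rho>' (kink y1 \<rho> (F u)) \<le> c + D"
    and "\<forall>u\<ge>t0 + \<delta>. kink y2 \<rho>' (kink y1 \<rho> (F u)) = c + D + m1 * (u - (t0 + \<delta>))"
proof -
  have pos: "m1 * \<rho> - m1 > 0" using m1 rho by (simp add: algebra_simps)
  have q0: "(D - m1 * \<delta>) / (m1 * \<rho> - m1) \<ge> 0" using D1 pos by simp
  have q1: "(D - m1 * \<delta>) / (m1 * \<rho> - m1) \<le> \<delta>"
    using D2 pos by (simp add: divide_le_eq algebra_simps)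
  have t1: "t0 \<le> \<tau>" "\<tau> \<le> t0 + \<delta>" using q0 q1 tau by auto
  have key: "m1 * (\<tau> - t0) + m1 * \<rho> * (t0 + \<delta> - \<tau>) = D"
  proof -
    define q where "q = (D - m1 * \<delta>) / (m1 * \<rho> - m1)"
    have hq: "(m1 * \<rho> - m1) * q = D - m1 * \<delta>" unfolding q_def
      using pos by (simp only: times_divide_eq_right) (rule nonzero_mult_div_cancel_left, auto)
    have tq: "\<tau> = t0 + \<delta> - q" using tau q_def by simp
    have "m1 * (\<tau> - t0) + m1 * \<rho> * (t0 + \<delta> - \<tau>) = m1 * \<delta> + (m1 * \<rho> - m1) * q"
      unfolding tq by (simp add: algebra_simps)
    then show ?thesis using hq by simp
  qed
  have cy1: "c \<le> y1" using y1 t1 m1 by simp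
  have "m1 * \<rho> * (t0 + \<delta> - \<tau>) \<ge> 0" using t1 m1 rho by (intro mult_nonneg_nonneg) auto
  then have y1y2: "y1 \<le> y2" using key unfolding y1 y2 by linarith
  have cy2: "c \<le> y2" using cy1 y1y2 by simp
  show "\<forall>u\<le>t0. kink y2 \<rho>' (kink y1 \<rho> (F u)) = F u"
  proof (intro allI impI)
    fix u assume "u \<le> t0"
    then have "F u \<le> c" using Fl by auto
    then show "kink y2 \<rho>' (kink y1 \<rho> (F u)) = F u" using cy1 cy2 unfolding kink_def by auto
  qed
  show "\<forall>u. t0 \<le> u \<longrightarrow> u \<le> t0 + \<delta> \<longrightarrow> c \<le> kink y2 \<rho>' (kink y1 \<rho> (F u)) \<and> kink y2 \<rho>' (kink y1 \<rho> (F u)) \<le> c + D"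
  proof (intro allI impI)
    fix u assume u: "t0 \<le> u" "u \<le> t0 + \<delta>"
    have Fu: "F u = c + m1 * (u - t0)" using Fr u by auto
    have k1: "c \<le> kink y1 \<rho> (F u) \<and> kink y1 \<rho> (F u) \<le> y2"
    proof (cases "F u \<le> y1")
      case True
      then show ?thesis using Fu u m1 y1y2 unfolding kink_def by simp
    next
      case False
      have "F u - y1 = m1 * (u - \<tau>)" using Fu y1 by (simp add: algebra_simps)
      moreover have "m1 * (u - \<tau>) \<le> m1 * (t0 + \<delta> - \<tau>)" using u m1 by simp
      ultimately have "F u - y1 \<le> m1 * (t0 + \<delta> - \<tau>)" by simp
      then have "\<rho> * (F u - y1) \<le> \<rho> * (m1 * (t0 + \<delta> - \<tau>))" using rho by (intro mult_left_mono) auto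
      then have "\<rho> * (F u - y1) \<le> m1 * \<rho> * (t0 + \<delta> - \<tau>)" by (simp add: algebra_simps)
      moreover have "y1 + m1 * \<rho> * (t0 + \<delta> - \<tau>) = y2" using key unfolding y1 y2 by linarith
      ultimately have "y1 + \<rho> * (F u - y1) \<le> y2" by linarith
      moreover have "\<rho> * (F u - y1) \<ge> 0" using False rho by simp
      moreover have "kink y1 \<rho> (F u) = y1 + \<rho> * (F u - y1)" using False unfolding kink_def by simp
      ultimately show ?thesis using cy1 by linarith
    qed
    then show "c \<le> kink y2 \<rho>' (kink y1 \<rho> (F u)) \<and> kink y2 \<rho>' (kink y1 \<rho> (F u)) \<le> c + D"
      using kink_below[of "kink y1 \<rho> (F u)" y2 \<rho>'] y2 by auto
  qed
  show "\<forall>u\<ge>t0 + \<delta>. kink y2 \<rho>' (kink y1 \<rho> (F u)) = c + D + m1 * (u - (t0 + \<delta>))"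
  proof (intro allI impI)
    fix u assume u: "t0 + \<delta> \<le> u"
    have Fu: "F u = c + m1 * (u - t0)" using Fr u dl by auto
    have "F u \<ge> y1" using Fu y1 t1 u m1 by (simp add: mult_left_mono)
    then have "kink y1 \<rho> (F u) = y1 + \<rho> * (F u - y1)" unfolding kink_def by auto
    also have "\<dots> = y2 + m1 * \<rho> * (u - (t0 + \<delta>))"
    proof -
      have "F u - y1 = m1 * (u - \<tau>)" using Fu y1 by (simp add: algebra_simps)
      then have "\<rho> * (F u - y1) = \<rho> * (m1 * (u - \<tau>))" by simp
      also have "\<dots> = m1 * \<rho> * (t0 + \<delta> - \<tau>) + m1 * \<rho> * (u - (t0 + \<delta>))"
        by (simp add: algebra_simps)
      finally have "\<rho> * (F u - y1) = m1 * \<rho> * (t0 + \<delta> - \<tau>) + m1 * \<rho> * (u - (t0 + \<delta>))" .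
      moreover have "y1 + m1 * \<rho> * (t0 + \<delta> - \<tau>) = y2" using key unfolding y1 y2 by linarith
      ultimately show ?thesis by linarith
    qed
    finally have K1: "kink y1 \<rho> (F u) = y2 + m1 * \<rho> * (u - (t0 + \<delta>))" .
    have "\<rho>' * (m1 * \<rho> * (u - (t0 + \<delta>))) = (\<rho>' * \<rho>) * (m1 * (u - (t0 + \<delta>)))"
      by (simp only: mult_ac)
    also have "\<dots> = m1 * (u - (t0 + \<delta>))" using rho' by simp
    finally have e: "\<rho>' * (m1 * \<rho> * (u - (t0 + \<delta>))) = m1 * (u - (t0 + \<delta>))" .
    have "m1 * \<rho> * (u - (t0 + \<delta>)) \<ge> 0" using u m1 rho by (intro mult_nonneg_nonneg) auto
    then show "kink y2 \<rho>' (kink y1 \<rho> (F u)) = c + D + m1 * (u - (t0 + \<delta>))"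
      unfolding K1 using kink_above e y2 by simp
  qed
qed

definition lay :: "real \<Rightarrow> real \<times> real \<times> real \<times> real \<Rightarrow> real \<Rightarrow> real" where
  "lay \<alpha> l u = (case l of (p,q,r,s) \<Rightarrow> p * lrelu \<alpha> (q*u+r) + s)"

definition comp1 :: "real \<Rightarrow> (real \<times> real \<times> real \<times> real) list \<Rightarrow> real \<Rightarrow> real" where
  "comp1 \<alpha> ls u = fold (lay \<alpha>) ls u"

definition good :: "(real \<times> real \<times> real \<times> real) list \<Rightarrow> bool" where
  "good ls \<longleftrightarrow> (\<forall>(p,q,r,s)\<in>set ls. p \<noteq> 0 \<and> q \<noteq> 0)"

lemma comp1_Cons: "comp1 \<alpha> (l#ls) u = comp1 \<alpha> ls (lay \<alpha> l u)"
  unfolding comp1_def by simp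

lemma comp1_append: "comp1 \<alpha> (xs @ ys) u = comp1 \<alpha> ys (comp1 \<alpha> xs u)"
  unfolding comp1_def by simp

lemma lrelu_neg: "z \<le> 0 \<Longrightarrow> \<alpha> \<le> 1 \<Longrightarrow> lrelu \<alpha> z = \<alpha> * z"
proof -
  assume "z \<le> 0" "\<alpha> \<le> 1"
  then have "(\<alpha> - 1) * z \<ge> 0" by (intro mult_nonpos_nonpos) auto
  then show ?thesis unfolding lrelu_def by (simp add: algebra_simps max_def)
qed

lemma lrelu_pos: "z \<ge> 0 \<Longrightarrow> \<alpha> \<le> 1 \<Longrightarrow> lrelu \<alpha> z = z"
proof -
  assume "z \<ge> 0" "\<alpha> \<le> 1"
  then have "(1 - \<alpha>) * z \<ge> 0" by (intro mult_nonneg_nonneg) auto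
  then show ?thesis unfolding lrelu_def by (simp add: algebra_simps max_def)
qed

lemma lrelu_inv': "0 < \<alpha> \<Longrightarrow> \<alpha> \<le> 1 \<Longrightarrow> lrelu \<alpha> (- lrelu \<alpha> z) = -\<alpha> * z"
proof (cases "z \<ge> 0")
  case True
  assume a: "0 < \<alpha>" "\<alpha> \<le> 1"
  then show ?thesis using True by (simp add: lrelu_pos lrelu_neg)
next
  case False
  assume a: "0 < \<alpha>" "\<alpha> \<le> 1"
  have "\<alpha> * z \<le> 0" using False a by (simp add: mult_pos_neg mult_nonneg_nonpos)
  then show ?thesis using False a by (simp add: lrelu_pos lrelu_neg)
qed

lemma lay_conv: "0 < \<alpha> \<Longrightarrow> \<alpha> \<le> 1 \<Longrightarrow> lay \<alpha> (1/\<alpha>, 1, -c, c) y = kink c (1/\<alpha>) y"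
  unfolding lay_def kink_def
  by (cases "y \<le> c") (auto simp: lrelu_pos lrelu_neg)

lemma lay_conc: "0 < \<alpha> \<Longrightarrow> \<alpha> \<le> 1 \<Longrightarrow> lay \<alpha> (-1, -1, c, c) y = kink c \<alpha> y"
  unfolding lay_def kink_def
  by (cases "y \<le> c") (auto simp: lrelu_pos lrelu_neg algebra_simps)

lemma kink_1: "kink c 1 y = y" unfolding kink_def by auto

lemma comp1_conv: "0 < \<alpha> \<Longrightarrow> \<alpha> \<le> 1 \<Longrightarrow> comp1 \<alpha> (replicate m (1/\<alpha>, 1, -c, c)) y = kink c ((1/\<alpha>)^m) y"
proof (induction m arbitrary: y)
  case 0 then show ?case by (simp add: comp1_def kink_1)
next
  case (Suc m) then show ?case by (simp add: comp1_Cons lay_conv kink_kink)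
qed

lemma comp1_conc: "0 < \<alpha> \<Longrightarrow> \<alpha> \<le> 1 \<Longrightarrow> comp1 \<alpha> (replicate m (-1, -1, c, c)) y = kink c (\<alpha>^m) y"
proof (induction m arbitrary: y)
  case 0 then show ?case by (simp add: comp1_def kink_1)
next
  case (Suc m) then show ?case by (simp add: comp1_Cons lay_conc kink_kink mult.commute)
qed

lemma comp1_affine: "0 < \<alpha> \<Longrightarrow> \<alpha> \<le> 1 \<Longrightarrow> comp1 \<alpha> [(1,1,0,0), (-A/\<alpha>,-1,0,B)] u = A*u+B"
proof -
  assume a: "0 < \<alpha>" "\<alpha> \<le> 1"
  have "comp1 \<alpha> [(1,1,0,0), (-A/\<alpha>,-1,0,B)] u = A * (-(1/\<alpha>) * lrelu \<alpha> (- lrelu \<alpha> u)) + B"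
    unfolding comp1_def lay_def by simp
  then show ?thesis using lrelu_inv'[OF a] a by simp
qed

lemma approx1d:
  fixes h :: "real \<Rightarrow> real"
  assumes al: "0 < \<alpha>" "\<alpha> < 1" and m1: "0 < m1" and m12: "m1 \<le> m2"
    and hL: "\<And>x y. x \<le> y \<Longrightarrow> m1*(y-x) \<le> h y - h x \<and> h y - h x \<le> m2*(y-x)"
    and ep: "0 < \<epsilon>"
  shows "\<exists>ls. good ls \<and> (\<forall>u. a \<le> u \<longrightarrow> u \<le> b \<longrightarrow> \<bar>comp1 \<alpha> ls u - h u\<bar> \<le> \<epsilon>)"
proof -
  have a1: "\<alpha> \<le> 1" using al by simp
  have ia: "1 < 1/\<alpha>" using al by simp
  obtain m where m: "m2/m1 < (1/\<alpha>)^m" using real_arch_pow[OF ia] by blast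
  define \<rho> where "\<rho> = (1/\<alpha>)^m"
  define \<rho>' where "\<rho>' = \<alpha>^m"
  have "1 \<le> m2/m1" using m1 m12 by simp
  then have rho: "\<rho> > 1" using m \<rho>_def by simp
  have rho': "\<rho>' * \<rho> = 1" unfolding \<rho>_def \<rho>'_def using al by (simp add: power_mult_distrib[symmetric])
  have m2r: "m2 < m1 * \<rho>" using m m1 \<rho>_def by (simp add: divide_less_eq mult.commute)
  have m2p: "m2 > 0" using m1 m12 by simp
  define \<delta> where "\<delta> = \<epsilon> / m2"
  have dl: "\<delta> > 0" using ep m2p \<delta>_def by simp
  define t where "t k = a + real k * \<delta>" for k
  have tS: "t (Suc k) = t k + \<delta>" for k unfolding t_def by (simp add: algebra_simps)
  have hmono: "h x \<le> h y" if "x \<le> y" for x y using hL[OF that] m1 that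
    by (smt (verit) mult_nonneg_nonneg)
  have P: "\<exists>ls. good ls \<and> (\<forall>u. a \<le> u \<longrightarrow> u \<le> t k \<longrightarrow> \<bar>comp1 \<alpha> ls u - h u\<bar> \<le> \<epsilon>)
      \<and> (\<forall>u\<le>t k. comp1 \<alpha> ls u \<le> h (t k)) \<and> (\<forall>u\<ge>t k. comp1 \<alpha> ls u = h (t k) + m1*(u - t k))" for k
  proof (induction k)
    case 0
    define ls where "ls = [(1::real,1::real,0::real,0::real), (-m1/\<alpha>,-1,0,h a - m1*a)]"
    have c: "comp1 \<alpha> ls u = h a + m1 * (u - a)" for u
      unfolding ls_def using comp1_affine[OF al(1) a1, of m1 "h a - m1*a" u] by (simp add: algebra_simps)
    have "good ls" unfolding ls_def good_def using al m1 by auto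
    moreover have "\<forall>u\<le>t 0. comp1 \<alpha> ls u \<le> h (t 0)"
      using m1 by (auto simp: c t_def mult_nonneg_nonpos)
    ultimately show ?case using ep by (intro exI[of _ ls]) (auto simp: c t_def)
  next
    case (Suc k)
    obtain ls where g: "good ls" and E: "\<forall>u. a \<le> u \<longrightarrow> u \<le> t k \<longrightarrow> \<bar>comp1 \<alpha> ls u - h u\<bar> \<le> \<epsilon>"
      and Fl: "\<forall>u\<le>t k. comp1 \<alpha> ls u \<le> h (t k)" and Fr: "\<forall>u\<ge>t k. comp1 \<alpha> ls u = h (t k) + m1*(u - t k)"
      using Suc.IH by blast
    define c where "c = h (t k)"
    define D where "D = h (t (Suc k)) - c"
    have hD: "m1 * \<delta> \<le> D \<and> D \<le> m2 * \<delta>" using hL[of "t k" "t (Suc k)"] dl unfolding D_def c_def tS by simp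
    have D2: "D \<le> m1 * \<rho> * \<delta>" using hD m2r dl by (smt (verit) mult_strict_right_mono)
    define \<tau> where "\<tau> = t k + \<delta> - (D - m1 * \<delta>) / (m1 * \<rho> - m1)"
    define y1 where "y1 = c + m1 * (\<tau> - t k)"
    define y2 where "y2 = c + D"
    define ls' where "ls' = ls @ replicate m (1/\<alpha>, 1, -y1, y1) @ replicate m (-1, -1, y2, y2)"
    have G: "comp1 \<alpha> ls' u = kink y2 \<rho>' (kink y1 \<rho> (comp1 \<alpha> ls u))" for u
      unfolding ls'_def comp1_append comp1_conv[OF al(1) a1] comp1_conc[OF al(1) a1] \<rho>_def \<rho>'_def ..
    note ks = kstep[OF m1 rho rho' dl conjunct1[OF hD] D2, of "t k" "comp1 \<alpha> ls" c \<tau> y1 y2,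
        OF Fr[folded c_def] Fl[folded c_def] \<tau>_def y1_def y2_def]
    have y2c: "y2 = h (t (Suc k))" unfolding y2_def D_def by simp
    have D0: "D \<ge> 0" using hD m1 dl by (smt (verit) mult_pos_pos)
    have "good ls'" using g al unfolding good_def ls'_def by auto
    moreover have "\<forall>u. a \<le> u \<longrightarrow> u \<le> t (Suc k) \<longrightarrow> \<bar>comp1 \<alpha> ls' u - h u\<bar> \<le> \<epsilon>"
    proof (intro allI impI)
      fix u assume u: "a \<le> u" "u \<le> t (Suc k)"
      show "\<bar>comp1 \<alpha> ls' u - h u\<bar> \<le> \<epsilon>"
      proof (cases "u \<le> t k")
        case True then show ?thesis using E u ks(1) G by simp
      next
        case False
        then have b: "c \<le> comp1 \<alpha> ls' u \<and> comp1 \<alpha> ls' u \<le> c + D" using ks(2) u tS G by simp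
        have "c \<le> h u" "h u \<le> c + D" using hmono[of "t k" u] hmono[of u "t (Suc k)"] False u
          unfolding c_def D_def by auto
        moreover have "D \<le> \<epsilon>" using hD \<delta>_def m2p by simp
        ultimately show ?thesis using b by linarith
      qed
    qed
    moreover have "\<forall>u\<le>t (Suc k). comp1 \<alpha> ls' u \<le> h (t (Suc k))"
    proof (intro allI impI)
      fix u assume u: "u \<le> t (Suc k)"
      show "comp1 \<alpha> ls' u \<le> h (t (Suc k))"
      proof (cases "u \<le> t k")
        case True then show ?thesis using ks(1) Fl G D0 y2c y2_def c_def by auto
      next
        case False then show ?thesis using ks(2) u tS G y2c y2_def by auto
      qed
    qed
    moreover have "\<forall>u\<ge>t (Suc k). comp1 \<alpha> ls' u = h (t (Suc k)) + m1*(u - t (Suc k))"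
      using ks(3) G y2c y2_def tS by auto
    ultimately show ?case by blast
  qed
  obtain N where N: "(b - a)/\<delta> \<le> real N" using real_arch_simple by blast
  have "b - a \<le> real N * \<delta>" using N dl by (simp add: pos_divide_le_eq)
  then have tN: "b \<le> t N" unfolding t_def by simp
  obtain ls where "good ls" "\<forall>u. a \<le> u \<longrightarrow> u \<le> t N \<longrightarrow> \<bar>comp1 \<alpha> ls u - h u\<bar> \<le> \<epsilon>" using P by blast
  then show ?thesis using tN by (intro exI[of _ ls]) auto
qed




definition invlay :: "real \<Rightarrow> real \<times> real \<times> real \<times> real \<Rightarrow> real \<times> real \<times> real \<times> real" where
  "invlay \<alpha> l = (case l of (p,q,r,s) \<Rightarrow> (-1/(\<alpha>*q), -1/p, s/p, -r/q))"

definition invls :: "real \<Rightarrow> (real \<times> real \<times> real \<times> real) list \<Rightarrow> (real \<times> real \<times> real \<times> real) list" where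
  "invls \<alpha> ls = rev (map (invlay \<alpha>) ls)"

lemma lay_inv: assumes "0 < \<alpha>" "\<alpha> \<le> 1" "p \<noteq> 0" "q \<noteq> 0"
  shows "lay \<alpha> (invlay \<alpha> (p,q,r,s)) (lay \<alpha> (p,q,r,s) u) = u"
proof -
  have e: "-1/p * (p * lrelu \<alpha> (q*u+r) + s) + s/p = - lrelu \<alpha> (q*u+r)" using assms by (simp add: field_simps)
  show ?thesis unfolding lay_def invlay_def using assms
    by (simp add: e lrelu_inv'[OF assms(1,2)] field_simps)
qed

lemma comp1_inv: assumes "0 < \<alpha>" "\<alpha> \<le> 1" "good ls" shows "comp1 \<alpha> (invls \<alpha> ls) (comp1 \<alpha> ls u) = u"
  using assms(3)
proof (induction ls arbitrary: u)
  case Nil then show ?case by (simp add: invls_def comp1_def)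
next
  case (Cons l ls)
  obtain p q r s where l: "l = (p,q,r,s)" by (cases l) auto
  have g: "good ls" "p \<noteq> 0" "q \<noteq> 0" using Cons.prems l unfolding good_def by auto
  have "comp1 \<alpha> (invls \<alpha> (l#ls)) (comp1 \<alpha> (l#ls) u)
      = lay \<alpha> (invlay \<alpha> l) (comp1 \<alpha> (invls \<alpha> ls) (comp1 \<alpha> ls (lay \<alpha> l u)))"
    unfolding invls_def by (simp add: comp1_append comp1_Cons) (simp add: comp1_def)
  also have "\<dots> = u" using Cons.IH[OF g(1)] lay_inv[OF assms(1,2) g(2,3)] l by simp
  finally show ?case .
qed

lemma good_invls: assumes "0 < \<alpha>" "good ls" shows "good (invls \<alpha> ls)"
  using assms unfolding good_def invls_def invlay_def by (auto split: prod.splits)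

definition cube :: "real \<Rightarrow> (real^'n) set" where
  "cube B = {x. \<forall>i. \<bar>x$i\<bar> \<le> B}"

definition vlay :: "real \<Rightarrow> 'n \<Rightarrow> real \<times> real \<times> real \<times> real \<Rightarrow> real^'n \<Rightarrow> real^'n" where
  "vlay \<alpha> j l x = (\<chi> i. if i = j then lay \<alpha> l (x$i) else x$i)"

definition vcomp :: "real \<Rightarrow> 'n \<Rightarrow> (real \<times> real \<times> real \<times> real) list \<Rightarrow> real^'n \<Rightarrow> real^'n" where
  "vcomp \<alpha> j ls x = (\<chi> i. if i = j then comp1 \<alpha> ls (x$i) else x$i)"

lemma vcomp_Cons: "vcomp \<alpha> j (l#ls) x = vcomp \<alpha> j ls (vlay \<alpha> j l x)"
  unfolding vcomp_def vlay_def by (simp add: vec_eq_iff comp1_Cons)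

lemma vcomp_Nil: "vcomp \<alpha> j [] x = x"
  unfolding vcomp_def by (simp add: vec_eq_iff comp1_def)

lemma vcomp_inv: "0 < \<alpha> \<Longrightarrow> \<alpha> \<le> 1 \<Longrightarrow> good ls \<Longrightarrow> vcomp \<alpha> j (invls \<alpha> ls) (vcomp \<alpha> j ls x) = x"
  unfolding vcomp_def by (simp add: vec_eq_iff comp1_inv)

lemma erep_cong: "erep \<alpha> S F \<Longrightarrow> (\<And>x. x \<in> S \<Longrightarrow> F x = G x) \<Longrightarrow> erep \<alpha> S G"
  unfolding erep_def by auto

lemma diag_mult: "(\<chi> i k. if i = k then d i else 0) *v x = (\<chi> i. d i * x$i)"
proof -
  have "(\<Sum>k\<in>UNIV. (if i = k then d i else 0) * x$k) = d i * x$i" for i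
  proof -
    have "(\<Sum>k\<in>UNIV. (if i = k then d i else 0) * x$k) = (\<Sum>k\<in>UNIV. if i = k then d i * x$i else 0)"
      by (rule sum.cong) auto
    then show ?thesis by simp
  qed
  then show ?thesis by (simp add: vec_eq_iff matrix_vector_mult_def)
qed

lemma abs_lrelu: "0 < \<alpha> \<Longrightarrow> \<alpha> \<le> 1 \<Longrightarrow> \<bar>lrelu \<alpha> z\<bar> \<le> \<bar>z\<bar>"
proof (cases "z \<ge> 0")
  case True
  assume "0 < \<alpha>" "\<alpha> \<le> 1"
  then show ?thesis using True by (simp add: lrelu_pos)
next
  case False
  assume a: "0 < \<alpha>" "\<alpha> \<le> 1"
  have "\<bar>\<alpha> * z\<bar> = \<alpha> * \<bar>z\<bar>" using a by (simp add: abs_mult)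
  also have "\<dots> \<le> 1 * \<bar>z\<bar>" using a by (intro mult_right_mono) auto
  finally show ?thesis using False a by (simp add: lrelu_neg)
qed

lemma vlay_rep: fixes j :: "'n::finite" assumes a: "0 < \<alpha>" "\<alpha> \<le> 1" and B: "B \<ge> 0"
  shows "erep \<alpha> (cube B) (vlay \<alpha> j l)"
proof -
  obtain p q r s where l: "l = (p,q,r,s)" by (cases l) auto
  define W0 :: "real^'n^'n" where "W0 = (\<chi> i k. if i = k then (if i = j then q else 1) else 0)"
  define b0 :: "real^'n" where "b0 = (\<chi> i. if i = j then r else B)"
  define W :: "real^'n^'n" where "W = (\<chi> i k. if i = k then (if i = j then p else 1) else 0)"
  define b :: "real^'n" where "b = (\<chi> i. if i = j then s else -B)"
  have f: "(\<lambda>x. W *v lrelu_vec \<alpha> (W0 *v x + b0) + b) \<in> NN \<alpha> (Suc 0)"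
    using NN_snoc[OF NN_affine] .
  have eq: "W *v lrelu_vec \<alpha> (W0 *v x + b0) + b = vlay \<alpha> j l x" if x: "x \<in> cube B" for x
  proof -
    have "x$i + B \<ge> 0" for i
    proof -
      have "\<bar>x$i\<bar> \<le> B" using x unfolding cube_def by blast
      then show ?thesis by (simp add: abs_le_iff)
    qed
    then show ?thesis unfolding W_def W0_def b_def b0_def diag_mult vlay_def lrelu_vec_def l lay_def
      using a by (simp add: vec_eq_iff lrelu_pos)
  qed
  show ?thesis unfolding erep_def
    by (rule exI[of _ "Suc 0"], rule bexI[OF _ f]) (simp add: eq)
qed

lemma vlay_bound: assumes a: "0 < \<alpha>" "\<alpha> \<le> 1" and B: "B \<ge> 0" and l: "l = (p,q,r,s)"
  shows "x \<in> cube B \<Longrightarrow> vlay \<alpha> j l x \<in> cube (B + \<bar>p\<bar> * (\<bar>q\<bar> * B + \<bar>r\<bar>) + \<bar>s\<bar>)"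
proof -
  assume x: "x \<in> cube B"
  have "\<bar>lay \<alpha> l u\<bar> \<le> \<bar>p\<bar> * (\<bar>q\<bar> * B + \<bar>r\<bar>) + \<bar>s\<bar>" if u: "\<bar>u\<bar> \<le> B" for u
  proof -
    have "\<bar>lrelu \<alpha> (q*u+r)\<bar> \<le> \<bar>q*u+r\<bar>" using abs_lrelu a by blast
    also have "\<dots> \<le> \<bar>q*u\<bar> + \<bar>r\<bar>" by (rule abs_triangle_ineq)
    also have "\<bar>q*u\<bar> \<le> \<bar>q\<bar> * B" using u by (simp add: abs_mult mult_left_mono)
    then have "\<bar>q*u\<bar> + \<bar>r\<bar> \<le> \<bar>q\<bar> * B + \<bar>r\<bar>" by simp
    finally have "\<bar>p * lrelu \<alpha> (q*u+r)\<bar> \<le> \<bar>p\<bar> * (\<bar>q\<bar> * B + \<bar>r\<bar>)" by (simp add: abs_mult mult_left_mono)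
    then show ?thesis unfolding lay_def l by simp
  qed
  moreover have "0 \<le> \<bar>p\<bar> * (\<bar>q\<bar> * B + \<bar>r\<bar>) + \<bar>s\<bar>" using B by simp
  ultimately have "\<bar>vlay \<alpha> j l x $ i\<bar> \<le> B + \<bar>p\<bar> * (\<bar>q\<bar> * B + \<bar>r\<bar>) + \<bar>s\<bar>" for i
  proof -
    assume h1: "\<And>u. \<bar>u\<bar> \<le> B \<Longrightarrow> \<bar>lay \<alpha> l u\<bar> \<le> \<bar>p\<bar> * (\<bar>q\<bar> * B + \<bar>r\<bar>) + \<bar>s\<bar>"
       and h2: "0 \<le> \<bar>p\<bar> * (\<bar>q\<bar> * B + \<bar>r\<bar>) + \<bar>s\<bar>"
    have xi: "\<bar>x$i\<bar> \<le> B" using x unfolding cube_def by blast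
    show ?thesis
    proof (cases "i = j")
      case True then show ?thesis using h1[OF xi] B unfolding vlay_def by simp
    next
      case False then show ?thesis using xi h2 unfolding vlay_def by (simp; linarith)
    qed
  qed
  then show ?thesis unfolding cube_def by blast
qed

lemma vcomp_rep: assumes a: "0 < \<alpha>" "\<alpha> \<le> 1"
  shows "B \<ge> 0 \<Longrightarrow> \<exists>B'\<ge>0. erep \<alpha> (cube B) (vcomp \<alpha> j ls) \<and> (\<forall>x\<in>cube B. vcomp \<alpha> j ls x \<in> cube B')"
proof (induction ls arbitrary: B)
  case Nil
  have e: "vcomp \<alpha> j [] = (\<lambda>x. x)" by (rule ext) (rule vcomp_Nil)
  have "erep \<alpha> (cube B) (\<lambda>x. id x + 0)" by (rule erep_linear) (rule linear_id)
  then have "erep \<alpha> (cube B) (\<lambda>x. x)" by (rule erep_cong) simp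
  then show ?case unfolding e using Nil by blast
next
  case (Cons l ls)
  obtain p q r s where l: "l = (p,q,r,s)" by (cases l) auto
  define B1 where "B1 = B + \<bar>p\<bar> * (\<bar>q\<bar> * B + \<bar>r\<bar>) + \<bar>s\<bar>"
  have B1: "B1 \<ge> 0" using Cons.prems B1_def by simp
  obtain B' where B': "B' \<ge> 0" and IH: "erep \<alpha> (cube B1) (vcomp \<alpha> j ls)" "\<forall>x\<in>cube B1. vcomp \<alpha> j ls x \<in> cube B'"
    using Cons.IH[OF B1] by blast
  have m: "\<And>x. x \<in> cube B \<Longrightarrow> vlay \<alpha> j l x \<in> cube B1" using vlay_bound[OF a Cons.prems l] B1_def by blast
  have "erep \<alpha> (cube B) (\<lambda>x. vcomp \<alpha> j ls (vlay \<alpha> j l x))"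
    by (rule erep_comp[OF vlay_rep[OF a Cons.prems] m IH(1)])
  then show ?case using IH(2) m B' by (auto simp: vcomp_Cons)
qed

lemma erep_lin': "linear L \<Longrightarrow> (\<And>x. x \<in> S \<Longrightarrow> F x = L x + c) \<Longrightarrow> erep \<alpha> S F"
  using erep_cong[OF erep_linear] by metis

lemma tanh_lip: assumes "x \<le> (y::real)" shows "0 \<le> tanh y - tanh x \<and> tanh y - tanh x \<le> y - x"
proof -
  have "(\<lambda>z. z - tanh z) x \<le> (\<lambda>z. z - tanh z) y"
  proof (rule DERIV_nonneg_imp_nondecreasing[OF assms])
    fix z :: real
    have "DERIV (\<lambda>z. z - tanh z) z :> 1 - (1 - tanh z ^ 2)"
      by (auto intro!: derivative_eq_intros)
    then show "\<exists>y. DERIV (\<lambda>z. z - tanh z) z :> y \<and> 0 \<le> y" by force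
  qed
  then show ?thesis using assms by simp
qed

lemma norm_single: "(\<And>i. i \<noteq> d \<Longrightarrow> z$i = 0) \<Longrightarrow> norm (z::real^'n) \<le> \<bar>z$d\<bar>"
proof -
  assume h: "\<And>i. i \<noteq> d \<Longrightarrow> z$i = 0"
  have "sum (\<lambda>i. \<bar>z$i\<bar>) UNIV = sum (\<lambda>i. if i = d then \<bar>z$d\<bar> else 0) UNIV"
    by (rule sum.cong) (auto simp: h)
  also have "\<dots> = \<bar>z$d\<bar>" by simp
  finally have "sum (\<lambda>i. \<bar>z$i\<bar>) UNIV = \<bar>z$d\<bar>" .
  then show ?thesis using norm_le_l1_cart[of z] by simp
qed




lemma Kbound: "compact K \<Longrightarrow> \<exists>R\<ge>0. \<forall>x\<in>K. norm x \<le> R"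
  using compact_imp_bounded bounded_pos by (metis less_imp_le)

lemma inner_split: "(w::real^'n) \<bullet> x = w$d * x$d + (\<Sum>k\<in>UNIV-{d}. w$k * x$k)"
  by (simp add: inner_vec_def sum.remove)

lemma lin3: "\<And>T M hy hx d::real. hy - hx = d + T \<Longrightarrow> -M \<le> T \<Longrightarrow> T \<le> M \<Longrightarrow> d - M \<le> hy - hx \<and> hy - hx \<le> d + M"
  by linarith

lemma case1:
  fixes w :: "real^'n" and d :: 'n
  assumes al: "0 < \<alpha>" "\<alpha> < 1" and wd: "w$d \<noteq> 0" and k1: "\<bar>w$d * a * dt\<bar> < 1"
    and K: "compact K" and ep: "\<epsilon> > 0"
  shows "\<exists>F. erep \<alpha> K F \<and> (\<forall>x\<in>K. norm ((\<chi> i. if i = d then x$i + a*dt*tanh(w \<bullet> x+\<beta>) else x$i) - F x) \<le> \<epsilon>)"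
proof -
  have a1: "\<alpha> \<le> 1" using al by simp
  obtain R where R: "R \<ge> 0" "\<forall>x\<in>K. norm x \<le> R" using Kbound[OF K] by blast
  define V where "V = norm w * R + \<bar>\<beta>\<bar>"
  have V0: "V \<ge> 0" unfolding V_def using R by simp
  have vb: "\<bar>w \<bullet> x + \<beta>\<bar> \<le> V" if "x \<in> K" for x
  proof -
    have "\<bar>w \<bullet> x\<bar> \<le> norm w * norm x" by (rule Cauchy_Schwarz_ineq2)
    also have "\<dots> \<le> norm w * R" using R that by (simp add: mult_left_mono)
    finally show ?thesis unfolding V_def by linarith
  qed
  have xb: "\<bar>x$i\<bar> \<le> R" if "x \<in> K" for x i using component_le_norm_cart[of x i] R that by force
  define k where "k = w$d * a * dt"
  define h where "h v = v + k * tanh v" for v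
  have hL: "(1 - \<bar>k\<bar>)*(y-x) \<le> h y - h x \<and> h y - h x \<le> (1 + \<bar>k\<bar>)*(y-x)" if xy: "x \<le> y" for x y
  proof -
    have t: "0 \<le> tanh y - tanh x" "tanh y - tanh x \<le> y - x" using tanh_lip[OF xy] by auto
    have "\<bar>k * (tanh y - tanh x)\<bar> \<le> \<bar>k\<bar> * (y - x)" using t by (simp add: abs_mult mult_left_mono)
    then have A: "- (\<bar>k\<bar> * (y - x)) \<le> k * (tanh y - tanh x)" "k * (tanh y - tanh x) \<le> \<bar>k\<bar> * (y - x)"
      by (simp_all add: abs_le_iff)
    have H: "h y - h x = (y - x) + k * (tanh y - tanh x)" unfolding h_def by (simp add: algebra_simps)
    have e1: "(1 - \<bar>k\<bar>)*(y-x) = (y-x) - \<bar>k\<bar>*(y-x)" "(1 + \<bar>k\<bar>)*(y-x) = (y-x) + \<bar>k\<bar>*(y-x)"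
      by (simp_all add: algebra_simps)
    show ?thesis unfolding e1 by (rule lin3[OF H A])
  qed
  have e2: "\<epsilon> * \<bar>w$d\<bar> > 0" using ep wd by simp
  obtain ls where g: "good ls" and ap: "\<forall>u. -V \<le> u \<longrightarrow> u \<le> V \<longrightarrow> \<bar>comp1 \<alpha> ls u - h u\<bar> \<le> \<epsilon> * \<bar>w$d\<bar>"
    using approx1d[OF al _ _ hL e2, of "-V" V] k1 k_def by auto
  define P where "P x = (\<chi> i. if i = d then w \<bullet> x + \<beta> else x$i)" for x
  have P1: "erep \<alpha> K P"
  proof (rule erep_lin'[where L="\<lambda>x. \<chi> i. if i = d then w \<bullet> x else x$i" and c="\<chi> i. if i = d then \<beta> else 0"])
    show "linear (\<lambda>x. \<chi> i. if i = d then w \<bullet> x else x$i)"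
      by (rule linearI) (simp_all add: vec_eq_iff inner_add_right)
  qed (simp add: P_def vec_eq_iff)
  have P2: "P x \<in> cube (R + V)" if "x \<in> K" for x
    using vb[OF that] xb[OF that] R V0 unfolding P_def cube_def by (auto simp: abs_le_iff) (smt (verit))+
  obtain B' where B': "B' \<ge> 0" "erep \<alpha> (cube (R+V)) (vcomp \<alpha> d ls)" "\<forall>x\<in>cube (R+V). vcomp \<alpha> d ls x \<in> cube B'"
    using vcomp_rep[OF al(1) a1, of "R+V" d ls] R V0 by auto
  define Q where "Q y = (\<chi> i. if i = d then (y$d - \<beta> - (\<Sum>k\<in>UNIV-{d}. w$k * y$k)) / w$d else y$i)" for y
  have Q1: "erep \<alpha> (cube B') Q"
  proof (rule erep_lin'[where L="\<lambda>y. \<chi> i. if i = d then (y$d - (\<Sum>k\<in>UNIV-{d}. w$k * y$k)) / w$d else y$i"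
        and c="\<chi> i. if i = d then - \<beta> / w$d else 0"])
    show "linear (\<lambda>y. \<chi> i. if i = d then (y$d - (\<Sum>k\<in>UNIV-{d}. w$k * y$k)) / w$d else y$i)"
      by (rule linearI) (simp_all add: vec_eq_iff sum.distrib sum_distrib_left algebra_simps diff_divide_distrib add_divide_distrib)
  qed (simp add: Q_def vec_eq_iff diff_divide_distrib)
  define F where "F x = Q (vcomp \<alpha> d ls (P x))" for x
  have PV: "vcomp \<alpha> d ls (P x) \<in> cube B'" if "x \<in> K" for x
    using B'(3) P2[OF that] by auto
  have "erep \<alpha> K F" unfolding F_def
    by (rule erep_comp[OF erep_comp[OF P1 P2 B'(2)] PV Q1])
  moreover have "norm ((\<chi> i. if i = d then x$i + a*dt*tanh(w \<bullet> x+\<beta>) else x$i) - F x) \<le> \<epsilon>" if x: "x \<in> K" for x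
  proof -
    define v where "v = w \<bullet> x + \<beta>"
    define S where "S = (\<Sum>k\<in>UNIV-{d}. w$k * x$k)"
    have vS: "v = w$d * x$d + S + \<beta>" unfolding v_def S_def using inner_split[of w x d] by simp
    have Sy: "(\<Sum>k\<in>UNIV-{d}. w$k * (vcomp \<alpha> d ls (P x))$k) = S"
      unfolding S_def by (rule sum.cong) (auto simp: vcomp_def P_def)
    have Fd: "F x $ d = (comp1 \<alpha> ls v - \<beta> - S) / w$d"
      unfolding F_def Q_def using Sy by (simp add: vcomp_def P_def v_def)
    have Fi: "F x $ i = x $ i" if "i \<noteq> d" for i
      unfolding F_def Q_def using that by (simp add: vcomp_def P_def)
    have "x$d + a*dt*tanh v - (comp1 \<alpha> ls v - \<beta> - S) / w$d = (h v - comp1 \<alpha> ls v) / w$d"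
      using wd unfolding h_def k_def vS by (simp add: field_simps)
    moreover have "\<bar>(h v - comp1 \<alpha> ls v) / w$d\<bar> \<le> \<epsilon>"
    proof -
      have "\<bar>comp1 \<alpha> ls v - h v\<bar> \<le> \<epsilon> * \<bar>w$d\<bar>" using ap vb[OF x] unfolding v_def by (simp add: abs_le_iff)
      then show ?thesis using wd by (simp add: abs_minus_commute pos_divide_le_eq)
    qed
    ultimately have Dd: "\<bar>((\<chi> i. if i = d then x$i + a*dt*tanh(w \<bullet> x+\<beta>) else x$i) - F x) $ d\<bar> \<le> \<epsilon>"
      using Fd unfolding v_def by simp
    have Zi: "((\<chi> i. if i = d then x$i + a*dt*tanh(w \<bullet> x+\<beta>) else x$i) - F x) $ i = 0" if "i \<noteq> d" for i
      using Fi[OF that] that by simp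
    have "norm ((\<chi> i. if i = d then x$i + a*dt*tanh(w \<bullet> x+\<beta>) else x$i) - F x)
       \<le> \<bar>((\<chi> i. if i = d then x$i + a*dt*tanh(w \<bullet> x+\<beta>) else x$i) - F x) $ d\<bar>"
      by (rule norm_single[OF Zi])
    then show ?thesis using Dd by linarith
  qed
  ultimately show ?thesis by blast
qed




lemma case2:
  fixes w :: "real^'n" and d j :: 'n
  assumes al: "0 < \<alpha>" "\<alpha> < 1" and wd: "w$d = 0" and wj: "w$j \<noteq> 0"
    and K: "compact K" and ep: "\<epsilon> > 0"
  shows "\<exists>F. erep \<alpha> K F \<and> (\<forall>x\<in>K. norm ((\<chi> i. if i = d then x$i + a*dt*tanh(w \<bullet> x+\<beta>) else x$i) - F x) \<le> \<epsilon>)"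
proof -
  have a1: "\<alpha> \<le> 1" using al by simp
  have jd: "j \<noteq> d" using wd wj by auto
  obtain R where R: "R \<ge> 0" "\<forall>x\<in>K. norm x \<le> R" using Kbound[OF K] by blast
  define V where "V = norm w * R + \<bar>\<beta>\<bar>"
  have V0: "V \<ge> 0" unfolding V_def using R by simp
  have vb: "\<bar>w \<bullet> x + \<beta>\<bar> \<le> V" if "x \<in> K" for x
  proof -
    have "\<bar>w \<bullet> x\<bar> \<le> norm w * norm x" by (rule Cauchy_Schwarz_ineq2)
    also have "\<dots> \<le> norm w * R" using R that by (simp add: mult_left_mono)
    finally show ?thesis unfolding V_def by linarith
  qed
  have xb: "\<bar>x$i\<bar> \<le> R" if "x \<in> K" for x i using component_le_norm_cart[of x i] R that by force
  define c where "c = \<bar>a * dt\<bar>"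
  define lam where "lam = c + 1"
  have c0: "c \<ge> 0" unfolding c_def by simp
  define h where "h v = lam * v - a * dt * tanh v" for v
  have hL: "1*(y-x) \<le> h y - h x \<and> h y - h x \<le> (1 + 2*c)*(y-x)" if xy: "x \<le> y" for x y
  proof -
    have t: "0 \<le> tanh y - tanh x" "tanh y - tanh x \<le> y - x" using tanh_lip[OF xy] by auto
    have "\<bar>a * dt * (tanh y - tanh x)\<bar> \<le> c * (y - x)" unfolding c_def using t
      by (simp add: abs_mult mult_left_mono)
    then have A: "- (c * (y - x)) \<le> - (a * dt * (tanh y - tanh x))" "- (a * dt * (tanh y - tanh x)) \<le> c * (y - x)"
      by (simp_all add: abs_le_iff)
    have H: "h y - h x = (lam * (y - x)) + - (a * dt * (tanh y - tanh x))" unfolding h_def by (simp add: algebra_simps)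
    have e1: "1*(y-x) = lam * (y - x) - c * (y - x)" "(1 + 2*c)*(y-x) = lam * (y - x) + c * (y - x)"
      unfolding lam_def by (simp_all add: algebra_simps)
    show ?thesis unfolding e1 by (rule lin3[OF H A])
  qed
  obtain ls where g: "good ls" and ap: "\<forall>u. -V \<le> u \<longrightarrow> u \<le> V \<longrightarrow> \<bar>comp1 \<alpha> ls u - h u\<bar> \<le> \<epsilon>"
    using approx1d[OF al _ _ hL ep, of "-V" V] c0 by auto
  define P where "P x = (\<chi> i. if i = j then w \<bullet> x + \<beta> else if i = d then x$i + lam * (w \<bullet> x + \<beta>) else x$i)" for x
  have P1: "erep \<alpha> K P"
  proof (rule erep_lin'[where L="\<lambda>x. \<chi> i. if i = j then w \<bullet> x else if i = d then x$i + lam * (w \<bullet> x) else x$i"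
        and c="\<chi> i. if i = j then \<beta> else if i = d then lam * \<beta> else 0"])
    show "linear (\<lambda>x. \<chi> i. if i = j then w \<bullet> x else if i = d then x$i + lam * (w \<bullet> x) else x$i)"
      by (rule linearI) (simp_all add: vec_eq_iff inner_add_right algebra_simps)
  qed (simp add: P_def vec_eq_iff algebra_simps)
  define Bp where "Bp = R + (1 + lam) * V"
  have lam0: "lam \<ge> 0" unfolding lam_def using c0 by simp
  have Bp0: "Bp \<ge> 0" unfolding Bp_def using R V0 lam0 by simp
  have P2: "P x \<in> cube Bp" if x: "x \<in> K" for x
  proof -
    have "\<bar>P x $ i\<bar> \<le> Bp" for i
    proof -
      have v: "\<bar>w \<bullet> x + \<beta>\<bar> \<le> V" using vb[OF x] .
      have lv: "\<bar>lam * (w \<bullet> x + \<beta>)\<bar> \<le> lam * V" using v lam0 by (simp add: abs_mult mult_left_mono)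
      have "lam * V \<ge> 0" using lam0 V0 by simp
      then show ?thesis using v lv xb[OF x, of i] unfolding P_def Bp_def by (auto simp: algebra_simps)
    qed
    then show ?thesis unfolding cube_def by simp
  qed
  obtain B1 where B1: "B1 \<ge> 0" "erep \<alpha> (cube Bp) (vcomp \<alpha> j ls)" "\<forall>x\<in>cube Bp. vcomp \<alpha> j ls x \<in> cube B1"
    using vcomp_rep[OF al(1) a1 Bp0, of j ls] by auto
  define M where "M y = (\<chi> i. if i = d then y$d - y$j else y$i)" for y :: "real^'n"
  have M1: "erep \<alpha> (cube B1) M"
  proof (rule erep_lin'[where L=M and c=0])
    show "linear M" unfolding M_def by (rule linearI) (simp_all add: vec_eq_iff algebra_simps)
  qed simp
  have M2: "M y \<in> cube (2*B1)" if y: "y \<in> cube B1" for y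
  proof -
    have yb: "\<bar>y$i\<bar> \<le> B1" for i using y unfolding cube_def by blast
    have "\<bar>M y $ i\<bar> \<le> 2*B1" for i
    proof (cases "i = d")
      case True
      have "\<bar>y$d - y$j\<bar> \<le> \<bar>y$d\<bar> + \<bar>y$j\<bar>" by (rule abs_triangle_ineq4)
      then show ?thesis using True yb[of d] yb[of j] unfolding M_def by simp
    next
      case False then show ?thesis using yb[of i] B1(1) unfolding M_def by simp
    qed
    then show ?thesis unfolding cube_def by blast
  qed
  obtain B2 where B2: "B2 \<ge> 0" "erep \<alpha> (cube (2*B1)) (vcomp \<alpha> j (invls \<alpha> ls))"
      "\<forall>x\<in>cube (2*B1). vcomp \<alpha> j (invls \<alpha> ls) x \<in> cube B2"
    using vcomp_rep[OF al(1) a1, of "2*B1" j "invls \<alpha> ls"] B1(1) by auto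
  define Q where "Q y = (\<chi> i. if i = j then (y$j - \<beta> - (\<Sum>k\<in>UNIV-{j}. w$k * y$k)) / w$j else y$i)" for y
  have Q1: "erep \<alpha> (cube B2) Q"
  proof (rule erep_lin'[where L="\<lambda>y. \<chi> i. if i = j then (y$j - (\<Sum>k\<in>UNIV-{j}. w$k * y$k)) / w$j else y$i"
        and c="\<chi> i. if i = j then - \<beta> / w$j else 0"])
    show "linear (\<lambda>y. \<chi> i. if i = j then (y$j - (\<Sum>k\<in>UNIV-{j}. w$k * y$k)) / w$j else y$i)"
      by (rule linearI) (simp_all add: vec_eq_iff sum.distrib sum_distrib_left algebra_simps diff_divide_distrib add_divide_distrib)
  qed (simp add: Q_def vec_eq_iff diff_divide_distrib)
  define F where "F x = Q (vcomp \<alpha> j (invls \<alpha> ls) (M (vcomp \<alpha> j ls (P x))))" for x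
  have PV1: "vcomp \<alpha> j ls (P x) \<in> cube B1" if "x \<in> K" for x
    using B1(3) P2[OF that] by auto
  have PV2: "M (vcomp \<alpha> j ls (P x)) \<in> cube (2*B1)" if "x \<in> K" for x
    using M2 PV1[OF that] by auto
  have PV3: "vcomp \<alpha> j (invls \<alpha> ls) (M (vcomp \<alpha> j ls (P x))) \<in> cube B2" if "x \<in> K" for x
    using B2(3) PV2[OF that] by auto
  have "erep \<alpha> K F" unfolding F_def
    by (rule erep_comp[OF erep_comp[OF erep_comp[OF erep_comp[OF P1 P2 B1(2)] PV1 M1] PV2 B2(2)] PV3 Q1])
  moreover have "norm ((\<chi> i. if i = d then x$i + a*dt*tanh(w \<bullet> x+\<beta>) else x$i) - F x) \<le> \<epsilon>" if x: "x \<in> K" for x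
  proof -
    define v where "v = w \<bullet> x + \<beta>"
    define S where "S = (\<Sum>k\<in>UNIV-{j}. w$k * x$k)"
    have vS: "v = w$j * x$j + S + \<beta>" unfolding v_def S_def using inner_split[of w x j] by simp
    define Y where "Y = vcomp \<alpha> j (invls \<alpha> ls) (M (vcomp \<alpha> j ls (P x)))"
    have Yj: "Y $ j = v" unfolding Y_def vcomp_def M_def P_def v_def using jd comp1_inv[OF al(1) a1 g] by simp
    have Yd: "Y $ d = x$d + lam * v - comp1 \<alpha> ls v" unfolding Y_def vcomp_def M_def P_def v_def using jd by simp
    have Yi: "Y $ i = x$i" if "i \<noteq> j" "i \<noteq> d" for i unfolding Y_def vcomp_def M_def P_def using that by simp
    have Sy: "(\<Sum>k\<in>UNIV-{j}. w$k * Y$k) = S"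
      unfolding S_def
    proof (rule sum.cong[OF refl])
      fix k assume "k \<in> UNIV - {j}"
      then show "w$k * Y$k = w$k * x$k" using Yi[of k] wd by (cases "k = d") auto
    qed
    have Fj: "F x $ j = x $ j"
      unfolding F_def Y_def[symmetric] Q_def using Sy Yj wj vS by (simp add: field_simps)
    have Fd: "F x $ d = x$d + lam * v - comp1 \<alpha> ls v"
      unfolding F_def Y_def[symmetric] Q_def using Yd jd by simp
    have Fi: "F x $ i = x $ i" if "i \<noteq> d" for i
      using Fj Yi that unfolding F_def Y_def[symmetric] Q_def by (cases "i = j") auto
    have "x$d + a*dt*tanh v - F x $ d = comp1 \<alpha> ls v - h v"
      unfolding Fd h_def by (simp add: algebra_simps)
    moreover have "\<bar>comp1 \<alpha> ls v - h v\<bar> \<le> \<epsilon>" using ap vb[OF x] unfolding v_def by (simp add: abs_le_iff)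
    ultimately have Dd: "\<bar>((\<chi> i. if i = d then x$i + a*dt*tanh(w \<bullet> x+\<beta>) else x$i) - F x) $ d\<bar> \<le> \<epsilon>"
      unfolding v_def by simp
    have Zi: "((\<chi> i. if i = d then x$i + a*dt*tanh(w \<bullet> x+\<beta>) else x$i) - F x) $ i = 0" if "i \<noteq> d" for i
      using Fi[OF that] that by simp
    have "norm ((\<chi> i. if i = d then x$i + a*dt*tanh(w \<bullet> x+\<beta>) else x$i) - F x)
       \<le> \<bar>((\<chi> i. if i = d then x$i + a*dt*tanh(w \<bullet> x+\<beta>) else x$i) - F x) $ d\<bar>"
      by (rule norm_single[OF Zi])
    then show ?thesis using Dd by linarith
  qed
  ultimately show ?thesis by blast
qed




theorem mainTheorem9:
  fixes \<alpha> a \<beta> dt :: real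
    and w :: "real^'n::{finite,linorder}"
  assumes "0 < \<alpha>" "\<alpha> < 1"
    and "CARD('n) \<ge> 2"
    and "max \<bar>a\<bar> (Max {\<bar>w $ i\<bar> | i. True}) > 0"
    and "0 < dt"
    and "dt < 1 / (max \<bar>a\<bar> (Max {\<bar>w $ i\<bar> | i. True}))\<^sup>2"
  shows "\<forall>K.  compact K \<longrightarrow> (\<forall>\<epsilon>>0. \<exists>L::nat. \<exists>f \<in> NN \<alpha> L.
           \<forall>x\<in>K. norm ((\<chi> i. if i = Max UNIV then x $ i + a * dt * tanh (w \<bullet> x + \<beta>)
                              else x $ i) - f x) \<le> \<epsilon>)"
proof (intro allI impI)
  fix K :: "(real^'n::{finite,linorder}) set" and \<epsilon> :: real
  assume K: "compact K" and ep: "\<epsilon> > 0"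
  define Cm where "Cm = max \<bar>a\<bar> (Max {\<bar>w $ i\<bar> | i. True})"
  have Cm0: "Cm > 0" using assms(4) Cm_def by simp
  have fin: "finite {\<bar>w $ i\<bar> | i. True}" by (simp add: full_SetCompr_eq)
  have wC: "\<bar>w$i\<bar> \<le> Cm" for i
  proof -
    have "\<bar>w$i\<bar> \<le> Max {\<bar>w $ i\<bar> | i. True}" by (rule Max_ge[OF fin]) blast
    then show ?thesis unfolding Cm_def by simp
  qed
  have aC: "\<bar>a\<bar> \<le> Cm" unfolding Cm_def by simp
  have dtC: "Cm * Cm * dt < 1"
  proof -
    have "dt < 1 / Cm^2" using assms(6) Cm_def by simp
    then have "dt * Cm^2 < 1" using Cm0 by (simp add: less_divide_eq)
    then show ?thesis by (simp add: power2_eq_square mult.commute)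
  qed
  have main: "\<exists>F. erep \<alpha> K F \<and> (\<forall>x\<in>K. norm ((\<chi> i. if i = Max UNIV then x$i + a*dt*tanh(w \<bullet> x+\<beta>) else x$i) - F x) \<le> \<epsilon>)"
  proof (cases "w $ Max UNIV = 0")
    case False
    have "\<bar>w $ Max UNIV * a * dt\<bar> = \<bar>w $ Max UNIV\<bar> * \<bar>a\<bar> * dt" using assms(5) by (simp add: abs_mult)
    also have "\<dots> \<le> Cm * Cm * dt" using wC aC assms(5) by (intro mult_right_mono mult_mono) auto
    finally have k1: "\<bar>w $ Max UNIV * a * dt\<bar> < 1" using dtC by simp
    show ?thesis by (rule case1[OF assms(1,2) False k1 K ep])
  next
    case True
    show ?thesis
    proof (cases "\<exists>j. w$j \<noteq> 0")
      case True2: True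
      then obtain j where "w$j \<noteq> 0" by blast
      then show ?thesis using case2[OF assms(1,2) True _ K ep] by blast
    next
      case False
      then have w0: "w = 0" by (simp add: vec_eq_iff)
      define c :: "real^'n::{finite,linorder}" where "c = (\<chi> i. if i = Max UNIV then a*dt*tanh \<beta> else 0)"
      have "erep \<alpha> K (\<lambda>x. (\<chi> i. if i = Max UNIV then x$i + a*dt*tanh(w \<bullet> x+\<beta>) else x$i))"
        by (rule erep_lin'[where L=id and c=c]) (simp_all add: linear_id w0 c_def vec_eq_iff)
      then show ?thesis using ep by (intro exI[of _ "\<lambda>x. (\<chi> i. if i = Max UNIV then x$i + a*dt*tanh(w \<bullet> x+\<beta>) else x$i)"]) auto
    qed
  qed
  then obtain F where F: "erep \<alpha> K F"
    and Fb: "\<forall>x\<in>K. norm ((\<chi> i. if i = Max UNIV then x$i + a*dt*tanh(w \<bullet> x+\<beta>) else x$i) - F x) \<le> \<epsilon>"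
    by blast
  obtain L f where f: "f \<in> NN \<alpha> L" "\<forall>x\<in>K. f x = F x" using F unfolding erep_def by blast
  show "\<exists>L::nat. \<exists>f \<in> NN \<alpha> L. \<forall>x\<in>K. norm ((\<chi> i. if i = Max UNIV then x $ i + a * dt * tanh (w \<bullet> x + \<beta>)
                              else x $ i) - f x) \<le> \<epsilon>"
    using f Fb by (intro exI[of _ L] bexI[of _ f]) auto
qed


end
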